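(* Let $d\ge 1$, let $f=(f_1,\dots,f_d):\mathbb{R}^d\to\mathbb{R}^d$ be smooth, and let $\phi:\mathbb{R}^d\to\mathbb{R}$ be smooth. Let $\gamma_1$ and $\gamma_2$ be two exotic aromatic rooted forests, with node sets $V_1$ (root $r_1$, non-root nodes $V_1^0=V_1\setminus\{r_1\}$) and $V_2$ (root $r_2$, non-root nodes $V_2^0=V_2\setminus\{r_2\}$). For maps $\varphi:\pi(r_2)\to V_1$ and $\psi:\Gamma(r_2)\to V_1$, let $\gamma_{\varphi,\psi}$ be the exotic aromatic rooted forest obtained as follows: its nodes are $V_1\cup V_2^0$ (disjoint union) with root $r_1$; it contains all edges and lianas of $\gamma_1$, all edges and lianas of $\gamma_2$ not incident to $r_2$; each edge $w\to r_2$ of $\gamma_2$ (with $w\in\pi(r_2)$) is replaced by the edge $w\to\varphi(w)$; and each liana end of $\gamma_2$ located at $r_2$ (an element $e\in\Gamma(r_2)$) is moved to the node $\psi(e)\in V_1$. Then $$F(\gamma_2)\big(F(\gamma_1)(\phi)\big)=\sum_{\varphi:\pi(r_2)\to V_1}\ \sum_{\psi:\Gamma(r_2)\to V_1} F(\gamma_{\varphi,\psi})(\phi),$$ where the sums run over all maps $\varphi$ and $\psi$.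
   Context: An exotic aromatic rooted forest $\gamma$ consists of a finite set of nodes $V$ with a distinguished node $r$ (the root), write $V^0=V\setminus\{r\}$; a set of directed edges such that every node of $V^0$ has exactly one outgoing edge and the root has none (cycles, i.e. aromas, are allowed); and a finite set of lianas, each liana being an undirected edge with two ends, each end attached to a node (both ends may be attached to the same node). For a node $v$, $\pi(v)$ denotes the set of nodes $w$ having an edge $w\to v$ (predecessors of $v$), and $\Gamma(v)$ denotes the set of liana ends attached to $v$ (so lianas are counted with multiplicity: a liana with both ends at $v$ contributes two elements of $\Gamma(v)$). Each non-root node $v$ carries an index $i_v\in\{1,\dots,d\}$ and each liana $l$ carries an index $j_l\in\{1,\dots,d\}$; for a liana end $e$ belonging to liana $l$ write $j_e=j_l$. Set $\partial_{I_{\pi(v)}}=\prod_{w\in\pi(v)}\partial_{i_w}$ and $\partial_{J_{\Gamma(v)}}=\prod_{e\in\Gamma(v)}\partial_{j_e}$, where $\partial_i=\partial/\partial x_i$. The elementary differential of $\gamma$ is the linear differential operator acting on smooth $\phi:\mathbb{R}^d\to\mathbb{R}$ by $$F(\gamma)(\phi)=\sum_{(i_v)_{v\in V^0}}\ \sum_{(j_l)_{l \text{ liana}}}\Big(\prod_{v\in V^0}\partial_{I_{\pi(v)}}\partial_{J_{\Gamma(v)}} f_{i_v}\Big)\,\partial_{I_{\pi(r)}}\partial_{J_{\Gamma(r)}}\phi,$$ all indices ranging over $\{1,\dots,d\}$. *)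

theory Defs
  imports "HOL-Analysis.Analysis" "HOL-Library.FuncSet" "HOL-Library.Multiset"
begin

definition partial :: "'n::finite \<Rightarrow> (real^'n \<Rightarrow> real) \<Rightarrow> (real^'n \<Rightarrow> real)" where
  "partial i g = (\<lambda>x. deriv (\<lambda>t. g (x + t *\<^sub>R axis i 1)) 0)"

fun pderivs :: "'n::finite list \<Rightarrow> (real^'n \<Rightarrow> real) \<Rightarrow> (real^'n \<Rightarrow> real)" where
  "pderivs [] g = g"
| "pderivs (i # is) g = partial i (pderivs is g)"

text \<open>Product of partial derivatives indexed by a multiset of coordinates
  (applied in an arbitrary order; for smooth functions the order is irrelevant).\<close>
definition pderivs_mset :: "'n::finite multiset \<Rightarrow> (real^'n \<Rightarrow> real) \<Rightarrow> (real^'n \<Rightarrow> real)" where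
  "pderivs_mset M g = pderivs (SOME xs. mset xs = M) g"

definition smooth :: "(real^'n::finite \<Rightarrow> real) \<Rightarrow> bool" where
  "smooth g \<longleftrightarrow> (\<forall>is. continuous_on UNIV (pderivs is g) \<and>
     (\<forall>i x. (\<lambda>t. pderivs is g (x + t *\<^sub>R axis i 1)) differentiable (at 0)))"

text \<open>Each liana l has two ends (l,True), (l,False);
  att maps a liana end to the node it is attached to. succ v is the target of the
  unique outgoing edge of a non-root node v (the value at the root is irrelevant).\<close>
record ('v, 'l) eaf =
  nodes :: "'v set"
  root :: 'v
  succ :: "'v \<Rightarrow> 'v"
  lianas :: "'l set"
  att :: "'l \<times> bool \<Rightarrow> 'v"

definition wf_eaf :: "('v, 'l) eaf \<Rightarrow> bool" where
  "wf_eaf \<gamma> \<longleftrightarrow> finite (nodes \<gamma>) \<and> root \<gamma> \<in> nodes \<gamma> \<and>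
     (\<forall>v \<in> nodes \<gamma> - {root \<gamma>}. succ \<gamma> v \<in> nodes \<gamma>) \<and>
     finite (lianas \<gamma>) \<and> (\<forall>e \<in> lianas \<gamma> \<times> UNIV. att \<gamma> e \<in> nodes \<gamma>)"

definition nonroot :: "('v, 'l) eaf \<Rightarrow> 'v set" where
  "nonroot \<gamma> = nodes \<gamma> - {root \<gamma>}"

definition liana_ends :: "('v, 'l) eaf \<Rightarrow> ('l \<times> bool) set" where
  "liana_ends \<gamma> = lianas \<gamma> \<times> UNIV"

definition preds :: "('v, 'l) eaf \<Rightarrow> 'v \<Rightarrow> 'v set" where
  "preds \<gamma> v = {w \<in> nonroot \<gamma>. succ \<gamma> w = v}"

definition ends_at :: "('v, 'l) eaf \<Rightarrow> 'v \<Rightarrow> ('l \<times> bool) set" where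
  "ends_at \<gamma> v = {e \<in> liana_ends \<gamma>. att \<gamma> e = v}"

definition deriv_idx :: "('v, 'l) eaf \<Rightarrow> ('v \<Rightarrow> 'n) \<Rightarrow> ('l \<Rightarrow> 'n) \<Rightarrow> 'v \<Rightarrow> 'n multiset" where
  "deriv_idx \<gamma> I J v = image_mset I (mset_set (preds \<gamma> v))
                       + image_mset (\<lambda>e. J (fst e)) (mset_set (ends_at \<gamma> v))"

definition elem_diff :: "(real^'n::finite \<Rightarrow> real^'n) \<Rightarrow> ('v, 'l) eaf
     \<Rightarrow> (real^'n \<Rightarrow> real) \<Rightarrow> (real^'n \<Rightarrow> real)" where
  "elem_diff f \<gamma> \<phi> = (\<lambda>x.
     \<Sum>I \<in> nonroot \<gamma> \<rightarrow>\<^sub>E (UNIV :: 'n set).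
     \<Sum>J \<in> lianas \<gamma> \<rightarrow>\<^sub>E (UNIV :: 'n set).
       (\<Prod>v \<in> nonroot \<gamma>. pderivs_mset (deriv_idx \<gamma> I J v) (\<lambda>y. f y $ I v) x)
       * pderivs_mset (deriv_idx \<gamma> I J (root \<gamma>)) \<phi> x)"

definition graft :: "('v, 'l1) eaf \<Rightarrow> ('w, 'l2) eaf \<Rightarrow> ('w \<Rightarrow> 'v) \<Rightarrow> ('l2 \<times> bool \<Rightarrow> 'v)
     \<Rightarrow> ('v + 'w, 'l1 + 'l2) eaf" where
  "graft \<gamma>1 \<gamma>2 \<phi> \<psi> =
     \<lparr> nodes = Inl ` nodes \<gamma>1 \<union> Inr ` nonroot \<gamma>2,
       root = Inl (root \<gamma>1),
       succ = (\<lambda>u. case u of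
                 Inl v \<Rightarrow> Inl (succ \<gamma>1 v)
               | Inr w \<Rightarrow> (if succ \<gamma>2 w = root \<gamma>2 then Inl (\<phi> w) else Inr (succ \<gamma>2 w))),
       lianas = Inl ` lianas \<gamma>1 \<union> Inr ` lianas \<gamma>2,
       att = (\<lambda>(l, b). case l of
                 Inl l1 \<Rightarrow> Inl (att \<gamma>1 (l1, b))
               | Inr l2 \<Rightarrow> (if att \<gamma>2 (l2, b) = root \<gamma>2 then Inl (\<psi> (l2, b))
                           else Inr (att \<gamma>2 (l2, b)))) \<rparr>"

end

theory Submission
  imports Defs
begin

lemma axis_DERIV:
  assumes "\<And>y. (\<lambda>t. g (y + t *\<^sub>R axis i 1)) differentiable (at (0::real))"
  shows "((\<lambda>s. g (y + s *\<^sub>R axis i (1::real))) has_real_derivative partial i g (y + s0 *\<^sub>R axis i 1)) (at s0)"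
proof -
  let ?z = "y + s0 *\<^sub>R axis i (1::real)"
  have "((\<lambda>t. g (?z + t *\<^sub>R axis i 1)) has_real_derivative partial i g ?z) (at 0)"
    using assms[of ?z] unfolding partial_def by (simp add: DERIV_deriv_iff_real_differentiable)
  hence "((\<lambda>t. g (?z + t *\<^sub>R axis i 1)) has_real_derivative partial i g ?z) (at (s0 + - s0))" by simp
  hence "((\<lambda>s. g (?z + (s + - s0) *\<^sub>R axis i 1)) has_real_derivative partial i g ?z) (at s0)"
    by (subst (asm) DERIV_shift) simp
  moreover have "(\<lambda>s. g (?z + (s + - s0) *\<^sub>R axis i 1)) = (\<lambda>s. g (y + s *\<^sub>R axis i 1))"
    by (rule ext) (simp add: algebra_simps)
  ultimately show ?thesis by simp
qed

lemma mvt_deriv: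
  fixes a b :: real
  assumes "a < b" "\<And>x. DERIV f x :> f' x"
  shows "\<exists>z. a < z \<and> z < b \<and> f b - f a = (b - a) * f' z"
proof -
  have "continuous_on {a..b} f"
    using assms(2) by (meson DERIV_isCont continuous_at_imp_continuous_on)
  moreover have "\<And>x. f differentiable (at x)"
    using assms(2) real_differentiable_def by blast
  ultimately obtain l z where "a < z" "z < b" "DERIV f z :> l" "f b - f a = (b - a) * l"
    using MVT[OF assms(1)] by blast
  thus ?thesis using assms(2) DERIV_unique by blast
qed

lemma mixed_mvt:
  fixes g :: "real^'n::finite \<Rightarrow> real"
  assumes d1: "\<And>y. (\<lambda>t. g (y + t *\<^sub>R axis i 1)) differentiable (at (0::real))"
    and d2: "\<And>y. (\<lambda>t. partial i g (y + t *\<^sub>R axis j 1)) differentiable (at (0::real))"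
    and h: "h > 0"
  shows "\<exists>\<xi> \<eta>. 0 < \<xi> \<and> \<xi> < h \<and> 0 < \<eta> \<and> \<eta> < h \<and>
     g (x + h *\<^sub>R axis i 1 + h *\<^sub>R axis j 1) - g (x + h *\<^sub>R axis i 1) - g (x + h *\<^sub>R axis j 1) + g x
     = h * h * partial j (partial i g) (x + \<xi> *\<^sub>R axis i 1 + \<eta> *\<^sub>R axis j 1)"
proof -
  define u where "u s = g (x + h *\<^sub>R axis j 1 + s *\<^sub>R axis i 1) - g (x + s *\<^sub>R axis i 1)" for s
  have du: "DERIV u s :> (partial i g (x + h *\<^sub>R axis j 1 + s *\<^sub>R axis i 1) - partial i g (x + s *\<^sub>R axis i 1))" for s
    unfolding u_def
    by (intro DERIV_diff axis_DERIV[OF d1])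
  obtain \<xi> where \<xi>: "0 < \<xi>" "\<xi> < h" "u h - u 0 = (h - 0) * (partial i g (x + h *\<^sub>R axis j 1 + \<xi> *\<^sub>R axis i 1) - partial i g (x + \<xi> *\<^sub>R axis i 1))"
    using mvt_deriv[OF h du] by blast
  define w where "w t = partial i g (x + \<xi> *\<^sub>R axis i 1 + t *\<^sub>R axis j 1)" for t
  have dw: "DERIV w t :> partial j (partial i g) (x + \<xi> *\<^sub>R axis i 1 + t *\<^sub>R axis j 1)" for t
    unfolding w_def by (rule axis_DERIV[OF d2])
  obtain \<eta> where \<eta>: "0 < \<eta>" "\<eta> < h" "w h - w 0 = (h - 0) * partial j (partial i g) (x + \<xi> *\<^sub>R axis i 1 + \<eta> *\<^sub>R axis j 1)"
    using mvt_deriv[OF h dw] by blast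
  have e1: "x + h *\<^sub>R axis j 1 + \<xi> *\<^sub>R axis i 1 = x + \<xi> *\<^sub>R axis i 1 + h *\<^sub>R axis j (1::real)"
    by (simp add: algebra_simps)
  have "u h - u 0 = g (x + h *\<^sub>R axis i 1 + h *\<^sub>R axis j 1) - g (x + h *\<^sub>R axis i 1) - g (x + h *\<^sub>R axis j 1) + g x"
    unfolding u_def by (simp add: algebra_simps)
  moreover have "u h - u 0 = h * (w h - w 0)"
    using \<xi>(3) unfolding w_def e1 by simp
  ultimately show ?thesis using \<xi> \<eta> by (metis mult.assoc diff_zero)
qed

lemma schwarz:
  fixes g :: "real^'n::finite \<Rightarrow> real"
  assumes d1: "\<And>y. (\<lambda>t. g (y + t *\<^sub>R axis i 1)) differentiable (at (0::real))"
    and d2: "\<And>y. (\<lambda>t. partial i g (y + t *\<^sub>R axis j 1)) differentiable (at (0::real))"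
    and d3: "\<And>y. (\<lambda>t. g (y + t *\<^sub>R axis j 1)) differentiable (at (0::real))"
    and d4: "\<And>y. (\<lambda>t. partial j g (y + t *\<^sub>R axis i 1)) differentiable (at (0::real))"
    and c1: "continuous_on UNIV (partial j (partial i g))"
    and c2: "continuous_on UNIV (partial i (partial j g))"
  shows "partial j (partial i g) x = partial i (partial j g) x"
proof (rule ccontr)
  let ?a = "partial j (partial i g) x" and ?b = "partial i (partial j g) x"
  assume ne: "?a \<noteq> ?b"
  define \<epsilon> where "\<epsilon> = \<bar>?a - ?b\<bar> / 2"
  have ep: "\<epsilon> > 0" using ne unfolding \<epsilon>_def by simp
  obtain \<delta>1 where \<delta>1: "\<delta>1 > 0" "\<And>y. dist y x < \<delta>1 \<Longrightarrow> dist (partial j (partial i g) y) ?a < \<epsilon>"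
    using c1 ep unfolding continuous_on_iff by blast
  obtain \<delta>2 where \<delta>2: "\<delta>2 > 0" "\<And>y. dist y x < \<delta>2 \<Longrightarrow> dist (partial i (partial j g) y) ?b < \<epsilon>"
    using c2 ep unfolding continuous_on_iff by blast
  define h where "h = min \<delta>1 \<delta>2 / 2"
  have h: "h > 0" using \<delta>1 \<delta>2 unfolding h_def by simp
  have close: "dist (x + p *\<^sub>R axis k 1 + q *\<^sub>R axis l 1) x < min \<delta>1 \<delta>2"
    if "0 < p" "p < h" "0 < q" "q < h" for p q and k l :: 'n
  proof -
    have "dist (x + p *\<^sub>R axis k 1 + q *\<^sub>R axis l 1) x = norm (p *\<^sub>R axis k (1::real) + q *\<^sub>R axis l 1)"
      by (simp add: dist_norm)
    also have "\<dots> \<le> norm (p *\<^sub>R axis k (1::real)) + norm (q *\<^sub>R axis l (1::real))"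
      by (rule norm_triangle_ineq)
    also have "\<dots> = p + q" using that by simp
    also have "\<dots> < min \<delta>1 \<delta>2" using that unfolding h_def by simp
    finally show ?thesis .
  qed
  obtain \<xi> \<eta> where A: "0 < \<xi>" "\<xi> < h" "0 < \<eta>" "\<eta> < h"
     "g (x + h *\<^sub>R axis i 1 + h *\<^sub>R axis j 1) - g (x + h *\<^sub>R axis i 1) - g (x + h *\<^sub>R axis j 1) + g x
     = h * h * partial j (partial i g) (x + \<xi> *\<^sub>R axis i 1 + \<eta> *\<^sub>R axis j 1)"
    using mixed_mvt[OF d1 d2 h] by blast
  obtain \<xi>' \<eta>' where B: "0 < \<xi>'" "\<xi>' < h" "0 < \<eta>'" "\<eta>' < h"
     "g (x + h *\<^sub>R axis j 1 + h *\<^sub>R axis i 1) - g (x + h *\<^sub>R axis j 1) - g (x + h *\<^sub>R axis i 1) + g x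
     = h * h * partial i (partial j g) (x + \<xi>' *\<^sub>R axis j 1 + \<eta>' *\<^sub>R axis i 1)"
    using mixed_mvt[OF d3 d4 h] by blast
  have sw: "x + h *\<^sub>R axis j 1 + h *\<^sub>R axis i 1 = x + h *\<^sub>R axis i 1 + h *\<^sub>R axis j (1::real)"
    by (simp add: algebra_simps)
  have "h * h * partial j (partial i g) (x + \<xi> *\<^sub>R axis i 1 + \<eta> *\<^sub>R axis j 1)
      = h * h * partial i (partial j g) (x + \<xi>' *\<^sub>R axis j 1 + \<eta>' *\<^sub>R axis i 1)"
    using A(5) B(5) unfolding sw by linarith
  hence eq: "partial j (partial i g) (x + \<xi> *\<^sub>R axis i 1 + \<eta> *\<^sub>R axis j 1)
      = partial i (partial j g) (x + \<xi>' *\<^sub>R axis j 1 + \<eta>' *\<^sub>R axis i 1)"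
    using h by simp
  have "dist (partial j (partial i g) (x + \<xi> *\<^sub>R axis i 1 + \<eta> *\<^sub>R axis j 1)) ?a < \<epsilon>"
    using \<delta>1(2) close[OF A(1-4)] by simp
  moreover have "dist (partial i (partial j g) (x + \<xi>' *\<^sub>R axis j 1 + \<eta>' *\<^sub>R axis i 1)) ?b < \<epsilon>"
    using \<delta>2(2) close[OF B(1-4)] by simp
  ultimately have "\<bar>?a - ?b\<bar> < 2 * \<epsilon>" using eq unfolding dist_real_def by linarith
  thus False unfolding \<epsilon>_def by simp
qed


definition AX :: "(real^'n::finite \<Rightarrow> real) \<Rightarrow> 'n \<Rightarrow> bool" where
  "AX g i \<longleftrightarrow> (\<forall>y. (\<lambda>t. g (y + t *\<^sub>R axis i 1)) differentiable (at (0::real)))"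

lemma AX_DERIV0: "AX g i \<Longrightarrow> ((\<lambda>t. g (y + t *\<^sub>R axis i 1)) has_real_derivative partial i g y) (at 0)"
  unfolding AX_def partial_def by (simp add: DERIV_deriv_iff_real_differentiable)

lemma AX_intro: "(\<And>y. ((\<lambda>t. g (y + t *\<^sub>R axis i 1)) has_real_derivative D y) (at 0)) \<Longrightarrow> AX g i"
  unfolding AX_def using real_differentiable_def by blast

lemma partial_eqI: "(\<And>y. ((\<lambda>t. g (y + t *\<^sub>R axis i 1)) has_real_derivative D y) (at 0)) \<Longrightarrow> partial i g = D"
  unfolding partial_def by (rule ext) (rule DERIV_imp_deriv)

lemma pderivs_append: "pderivs (xs @ ys) g = pderivs xs (pderivs ys g)"
  by (induction xs) auto

lemma smooth_pderivs: "smooth g \<Longrightarrow> smooth (pderivs ys g)"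
  unfolding smooth_def by (metis pderivs_append)

lemma smooth_partial: "smooth g \<Longrightarrow> smooth (partial i g)"
  using smooth_pderivs[of g "[i]"] by simp

lemma smooth_AX: "smooth g \<Longrightarrow> AX g i"
  unfolding smooth_def AX_def by (metis pderivs.simps(1))

lemma smooth_cont: "smooth g \<Longrightarrow> continuous_on UNIV g"
  unfolding smooth_def by (metis pderivs.simps(1))

lemma partial_commute:
  assumes "smooth g" shows "partial j (partial i g) = partial i (partial j g)"
proof
  fix x
  show "partial j (partial i g) x = partial i (partial j g) x"
  proof (rule schwarz)
    show "\<And>y. (\<lambda>t. g (y + t *\<^sub>R axis i 1)) differentiable (at (0::real))"
      using smooth_AX[OF assms] unfolding AX_def by blast
    show "\<And>y. (\<lambda>t. g (y + t *\<^sub>R axis j 1)) differentiable (at (0::real))"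
      using smooth_AX[OF assms] unfolding AX_def by blast
    show "\<And>y. (\<lambda>t. partial i g (y + t *\<^sub>R axis j 1)) differentiable (at (0::real))"
      using smooth_AX[OF smooth_partial[OF assms]] unfolding AX_def by blast
    show "\<And>y. (\<lambda>t. partial j g (y + t *\<^sub>R axis i 1)) differentiable (at (0::real))"
      using smooth_AX[OF smooth_partial[OF assms]] unfolding AX_def by blast
    show "continuous_on UNIV (partial j (partial i g))"
      using smooth_cont[OF smooth_partial[OF smooth_partial[OF assms]]] .
    show "continuous_on UNIV (partial i (partial j g))"
      using smooth_cont[OF smooth_partial[OF smooth_partial[OF assms]]] .
  qed
qed

lemma pderivs_partial_comm: "smooth g \<Longrightarrow> pderivs ys (partial a g) = partial a (pderivs ys g)"
proof (induction ys)
  case Nil then show ?case by simp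
next
  case (Cons y ys)
  then show ?case using partial_commute[OF smooth_pderivs[OF Cons.prems, of ys]] by simp
qed

lemma pderivs_perm: "smooth g \<Longrightarrow> mset xs = mset ys \<Longrightarrow> pderivs xs g = pderivs ys g"
proof (induction xs arbitrary: ys)
  case Nil then show ?case by simp
next
  case (Cons a xs)
  then have "a \<in> set ys" by (metis list.set_intros(1) set_mset_mset)
  then obtain ys1 ys2 where ys: "ys = ys1 @ a # ys2" by (meson split_list)
  have "mset xs = mset (ys1 @ ys2)" using Cons.prems(2) ys by simp
  hence "pderivs xs g = pderivs (ys1 @ ys2) g" using Cons by blast
  moreover have "pderivs ys g = pderivs ys1 (partial a (pderivs ys2 g))"
    using ys by (simp add: pderivs_append)
  moreover have "\<dots> = partial a (pderivs (ys1 @ ys2) g)"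
    by (simp add: pderivs_append pderivs_partial_comm[OF smooth_pderivs[OF Cons.prems(1)]])
  ultimately show ?case by simp
qed

lemma pm_list: "smooth g \<Longrightarrow> mset xs = M \<Longrightarrow> pderivs_mset M g = pderivs xs g"
  unfolding pderivs_mset_def
  by (rule pderivs_perm) (auto intro: someI_ex ex_mset)

lemma pm_empty: "pderivs_mset {#} g = g"
  unfolding pderivs_mset_def by simp

lemma pm_plus: "smooth g \<Longrightarrow> pderivs_mset (M + N) g = pderivs_mset M (pderivs_mset N g)"
proof -
  assume g: "smooth g"
  obtain xs ys where "mset xs = M" "mset ys = N" using ex_mset by metis
  moreover have "smooth (pderivs ys g)" using smooth_pderivs[OF g] .
  ultimately show ?thesis using pm_list[OF g, of "xs @ ys"] pm_list[OF g, of ys] pm_list[of "pderivs ys g" xs]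
    by (simp add: pderivs_append)
qed

lemma smooth_pm: "smooth g \<Longrightarrow> smooth (pderivs_mset M g)"
  unfolding pderivs_mset_def by (rule smooth_pderivs)

lemma pm_add: "smooth g \<Longrightarrow> pderivs_mset (add_mset a M) g = partial a (pderivs_mset M g)"
proof -
  assume g: "smooth g"
  obtain xs where "mset xs = M" using ex_mset by metis
  thus ?thesis using pm_list[OF g, of "a # xs"] pm_list[OF g, of xs] by simp
qed

inductive SP :: "(real^'n::finite \<Rightarrow> real) \<Rightarrow> bool" where
  sm: "smooth g \<Longrightarrow> SP g"
| mu: "smooth g \<Longrightarrow> smooth h \<Longrightarrow> SP (\<lambda>x. g x * h x)"
| ad: "SP f1 \<Longrightarrow> SP f2 \<Longrightarrow> SP (\<lambda>x. f1 x + f2 x)"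

lemma AX_mult: "AX g i \<Longrightarrow> AX h i \<Longrightarrow> ((\<lambda>t. g (y + t *\<^sub>R axis i 1) * h (y + t *\<^sub>R axis i 1))
   has_real_derivative (partial i g y * h y + g y * partial i h y)) (at 0)"
  using DERIV_mult[OF AX_DERIV0[of g i y] AX_DERIV0[of h i y]] by (simp add: mult.commute)

lemma AX_add: "AX g i \<Longrightarrow> AX h i \<Longrightarrow> ((\<lambda>t. g (y + t *\<^sub>R axis i 1) + h (y + t *\<^sub>R axis i 1))
   has_real_derivative (partial i g y + partial i h y)) (at 0)"
  using DERIV_add[OF AX_DERIV0[of g i y] AX_DERIV0[of h i y]] by simp

lemma partial_mult: "AX g i \<Longrightarrow> AX h i \<Longrightarrow>
  partial i (\<lambda>x. g x * h x) = (\<lambda>x. partial i g x * h x + g x * partial i h x)"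
  by (rule partial_eqI) (rule AX_mult)

lemma partial_add: "AX g i \<Longrightarrow> AX h i \<Longrightarrow>
  partial i (\<lambda>x. g x + h x) = (\<lambda>x. partial i g x + partial i h x)"
  by (rule partial_eqI) (rule AX_add)

lemma SP_props: "SP f \<Longrightarrow> (\<forall>i. AX f i) \<and> continuous_on UNIV f \<and> (\<forall>i. SP (partial i f))"
proof (induction rule: SP.induct)
  case (sm g)
  then show ?case using smooth_AX smooth_cont smooth_partial SP.sm by blast
next
  case (mu g h)
  have "AX (\<lambda>x. g x * h x) i" for i
    using AX_mult[OF smooth_AX[OF mu(1)] smooth_AX[OF mu(2)]] by (rule AX_intro)
  moreover have "continuous_on UNIV (\<lambda>x. g x * h x)"
    using smooth_cont[OF mu(1)] smooth_cont[OF mu(2)] by (intro continuous_intros)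
  moreover have "SP (partial i (\<lambda>x. g x * h x))" for i
    unfolding partial_mult[OF smooth_AX[OF mu(1)] smooth_AX[OF mu(2)]]
    using mu smooth_partial by (intro SP.ad SP.mu) auto
  ultimately show ?case by blast
next
  case (ad f1 f2)
  have "AX (\<lambda>x. f1 x + f2 x) i" for i
    using AX_add ad by (intro AX_intro) blast
  moreover have "continuous_on UNIV (\<lambda>x. f1 x + f2 x)"
    using ad by (intro continuous_intros) auto
  moreover have "SP (partial i (\<lambda>x. f1 x + f2 x))" for i
    using ad by (subst partial_add) (auto intro: SP.ad)
  ultimately show ?case by blast
qed

lemma SP_pderivs: "SP f \<Longrightarrow> SP (pderivs is f)"
  by (induction "is") (auto dest: SP_props)

lemma SP_smooth: "SP f \<Longrightarrow> smooth f"
  unfolding smooth_def using SP_pderivs SP_props unfolding AX_def by blast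

lemma smooth_mult: "smooth g \<Longrightarrow> smooth h \<Longrightarrow> smooth (\<lambda>x. g x * h x)"
  by (rule SP_smooth) (rule SP.mu)

lemma smooth_add: "smooth g \<Longrightarrow> smooth h \<Longrightarrow> smooth (\<lambda>x. g x + h x)"
  by (rule SP_smooth) (intro SP.ad SP.sm)

lemma partial_const: "partial i (\<lambda>x. c) = (\<lambda>x. 0)"
  by (rule partial_eqI) simp

lemma pderivs_const: "pderivs is (\<lambda>x. c) = (\<lambda>x. if is = [] then c else 0)"
  by (induction "is") (auto simp: partial_const)

lemma smooth_const: "smooth (\<lambda>x. c)"
  unfolding smooth_def pderivs_const
  by (auto intro: continuous_intros)

lemma smooth_sum: "(\<And>a. a \<in> A \<Longrightarrow> smooth (F a)) \<Longrightarrow> smooth (\<lambda>x. \<Sum>a\<in>A. F a x)"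
proof (induction A rule: infinite_finite_induct)
  case (infinite A) then show ?case by (simp add: smooth_const)
next
  case empty then show ?case by (simp add: smooth_const)
next
  case (insert a A) then show ?case by (simp add: smooth_add)
qed

lemma smooth_prod: "(\<And>a. a \<in> A \<Longrightarrow> smooth (F a)) \<Longrightarrow> smooth (\<lambda>x. \<Prod>a\<in>A. F a x)"
proof (induction A rule: infinite_finite_induct)
  case (infinite A) then show ?case by (simp add: smooth_const)
next
  case empty then show ?case by (simp add: smooth_const)
next
  case (insert a A) then show ?case by (simp add: smooth_mult)
qed

lemma partial_sum: "(\<And>a. a \<in> A \<Longrightarrow> smooth (F a)) \<Longrightarrow>
  partial i (\<lambda>x. \<Sum>a\<in>A. F a x) = (\<lambda>x. \<Sum>a\<in>A. partial i (F a) x)"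
proof (induction A rule: infinite_finite_induct)
  case (infinite A) then show ?case by (simp add: partial_const)
next
  case empty then show ?case by (simp add: partial_const)
next
  case (insert a A)
  have "partial i (\<lambda>x. \<Sum>a\<in>insert a A. F a x) = partial i (\<lambda>x. F a x + (\<Sum>a\<in>A. F a x))"
    using insert by simp
  also have "\<dots> = (\<lambda>x. partial i (F a) x + partial i (\<lambda>x. \<Sum>a\<in>A. F a x) x)"
    using insert by (intro partial_add smooth_AX smooth_sum) auto
  finally show ?case using insert by simp
qed

lemma partial_prod: "finite V \<Longrightarrow> (\<And>a. a \<in> V \<Longrightarrow> smooth (G a)) \<Longrightarrow>
  partial i (\<lambda>x. \<Prod>v\<in>V. G v x) = (\<lambda>x. \<Sum>u\<in>V. partial i (G u) x * (\<Prod>v\<in>V-{u}. G v x))"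
proof (induction V rule: finite_induct)
  case empty then show ?case by (simp add: partial_const)
next
  case (insert a V)
  have "partial i (\<lambda>x. \<Prod>v\<in>insert a V. G v x) = partial i (\<lambda>x. G a x * (\<Prod>v\<in>V. G v x))"
    using insert by simp
  also have "\<dots> = (\<lambda>x. partial i (G a) x * (\<Prod>v\<in>V. G v x) + G a x * partial i (\<lambda>x. \<Prod>v\<in>V. G v x) x)"
    using insert by (intro partial_mult smooth_AX smooth_prod) auto
  also have "\<dots> = (\<lambda>x. \<Sum>u\<in>insert a V. partial i (G u) x * (\<Prod>v\<in>insert a V-{u}. G v x))"
  proof
    fix x
    have "(\<Sum>u\<in>V. partial i (G u) x * (\<Prod>v\<in>insert a V-{u}. G v x))
        = (\<Sum>u\<in>V. G a x * (partial i (G u) x * (\<Prod>v\<in>V-{u}. G v x)))"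
    proof (rule sum.cong[OF refl])
      fix u assume u: "u \<in> V"
      have "insert a V - {u} = insert a (V - {u})" using u insert(2) by auto
      thus "partial i (G u) x * (\<Prod>v\<in>insert a V-{u}. G v x) = G a x * (partial i (G u) x * (\<Prod>v\<in>V-{u}. G v x))"
        using insert(1,2) u by simp
    qed
    moreover have "insert a V - {a} = V" using insert(2) by auto
    ultimately show "partial i (G a) x * (\<Prod>v\<in>V. G v x) + G a x * partial i (\<lambda>x. \<Prod>v\<in>V. G v x) x
       = (\<Sum>u\<in>insert a V. partial i (G u) x * (\<Prod>v\<in>insert a V-{u}. G v x))"
      using insert by (simp add: sum_distrib_left)
  qed
  finally show ?case .
qed

lemma pm_sum: "(\<And>a. a \<in> A \<Longrightarrow> smooth (F a)) \<Longrightarrow>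
  pderivs_mset M (\<lambda>x. \<Sum>a\<in>A. F a x) = (\<lambda>x. \<Sum>a\<in>A. pderivs_mset M (F a) x)"
proof (induction M)
  case empty then show ?case by (simp add: pm_empty)
next
  case (add b M)
  have "pderivs_mset (add_mset b M) (\<lambda>x. \<Sum>a\<in>A. F a x) = partial b (pderivs_mset M (\<lambda>x. \<Sum>a\<in>A. F a x))"
    using add by (intro pm_add smooth_sum) auto
  also have "\<dots> = partial b (\<lambda>x. \<Sum>a\<in>A. pderivs_mset M (F a) x)" using add by simp
  also have "\<dots> = (\<lambda>x. \<Sum>a\<in>A. partial b (pderivs_mset M (F a)) x)"
    using add by (intro partial_sum smooth_pm) auto
  also have "\<dots> = (\<lambda>x. \<Sum>a\<in>A. pderivs_mset (add_mset b M) (F a) x)"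
    using add by (simp add: pm_add)
  finally show ?case .
qed


lemma leibniz:
  fixes c :: "'e \<Rightarrow> 'n::finite" and G :: "'v \<Rightarrow> real^'n \<Rightarrow> real"
  assumes "finite E" "finite V" "\<And>v. v \<in> V \<Longrightarrow> smooth (G v)"
  shows "pderivs_mset (image_mset c (mset_set E)) (\<lambda>x. \<Prod>v\<in>V. G v x) =
    (\<lambda>x. \<Sum>\<sigma>\<in>E \<rightarrow>\<^sub>E V. \<Prod>v\<in>V. pderivs_mset (image_mset c (mset_set {e\<in>E. \<sigma> e = v})) (G v) x)"
  using assms(1)
proof (induction E rule: finite_induct)
  case empty
  then show ?case by (simp add: pm_empty)
next
  case (insert a E)
  define H where "H \<sigma> v = pderivs_mset (image_mset c (mset_set {e\<in>E. \<sigma> e = v})) (G v)" for \<sigma> v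
  have sH: "smooth (H \<sigma> v)" if "v \<in> V" for \<sigma> v
    unfolding H_def using assms(3)[OF that] by (rule smooth_pm)
  have "pderivs_mset (image_mset c (mset_set (insert a E))) (\<lambda>x. \<Prod>v\<in>V. G v x)
      = partial (c a) (pderivs_mset (image_mset c (mset_set E)) (\<lambda>x. \<Prod>v\<in>V. G v x))"
    using insert assms by (simp add: pm_add smooth_prod)
  also have "\<dots> = partial (c a) (\<lambda>x. \<Sum>\<sigma>\<in>E \<rightarrow>\<^sub>E V. \<Prod>v\<in>V. H \<sigma> v x)"
    using insert.IH unfolding H_def by simp
  also have "\<dots> = (\<lambda>x. \<Sum>\<sigma>\<in>E \<rightarrow>\<^sub>E V. partial (c a) (\<lambda>x. \<Prod>v\<in>V. H \<sigma> v x) x)"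
    using sH by (intro partial_sum smooth_prod) auto
  also have "\<dots> = (\<lambda>x. \<Sum>\<sigma>\<in>E \<rightarrow>\<^sub>E V. \<Sum>u\<in>V. partial (c a) (H \<sigma> u) x * (\<Prod>v\<in>V-{u}. H \<sigma> v x))"
    using sH assms(2) by (simp add: partial_prod)
  also have "\<dots> = (\<lambda>x. \<Sum>\<sigma>\<in>insert a E \<rightarrow>\<^sub>E V. \<Prod>v\<in>V. pderivs_mset (image_mset c (mset_set {e\<in>insert a E. \<sigma> e = v})) (G v) x)"
  proof
    fix x
    define F where "F \<sigma> = (\<Prod>v\<in>V. pderivs_mset (image_mset c (mset_set {e\<in>insert a E. \<sigma> e = v})) (G v) x)" for \<sigma>
    have key: "F (\<sigma>(a:=u)) = partial (c a) (H \<sigma> u) x * (\<Prod>v\<in>V-{u}. H \<sigma> v x)"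
      if u: "u \<in> V" for \<sigma> u
    proof -
      have set: "{e\<in>insert a E. (\<sigma>(a:=u)) e = v} = (if v = u then insert a {e\<in>E. \<sigma> e = v} else {e\<in>E. \<sigma> e = v})" for v
        using insert(2) by auto
      have "F (\<sigma>(a:=u)) = pderivs_mset (image_mset c (mset_set {e\<in>insert a E. (\<sigma>(a:=u)) e = u})) (G u) x *
          (\<Prod>v\<in>V-{u}. pderivs_mset (image_mset c (mset_set {e\<in>insert a E. (\<sigma>(a:=u)) e = v})) (G v) x)"
        unfolding F_def using u assms(2) by (simp add: prod.remove)
      also have "\<dots> = partial (c a) (H \<sigma> u) x * (\<Prod>v\<in>V-{u}. H \<sigma> v x)"
        unfolding set H_def using insert(1,2) u assms(3) by (simp add: pm_add)
      finally show ?thesis .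
    qed
    have "(\<Sum>\<sigma>\<in>insert a E \<rightarrow>\<^sub>E V. F \<sigma>) = (\<Sum>p\<in>V \<times> (E \<rightarrow>\<^sub>E V). F ((\<lambda>(y, g). g(a := y)) p))"
      unfolding PiE_insert_eq using inj_combinator[OF insert(2), of "\<lambda>_. V"]
      by (simp add: sum.reindex)
    also have "\<dots> = (\<Sum>u\<in>V. \<Sum>\<sigma>\<in>E \<rightarrow>\<^sub>E V. F (\<sigma>(a:=u)))"
      by (simp add: sum.cartesian_product split_def)
    also have "\<dots> = (\<Sum>\<sigma>\<in>E \<rightarrow>\<^sub>E V. \<Sum>u\<in>V. F (\<sigma>(a:=u)))"
      by (rule sum.swap)
    also have "\<dots> = (\<Sum>\<sigma>\<in>E \<rightarrow>\<^sub>E V. \<Sum>u\<in>V. partial (c a) (H \<sigma> u) x * (\<Prod>v\<in>V-{u}. H \<sigma> v x))"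
      using key by simp
    finally show "(\<Sum>\<sigma>\<in>E \<rightarrow>\<^sub>E V. \<Sum>u\<in>V. partial (c a) (H \<sigma> u) x * (\<Prod>v\<in>V-{u}. H \<sigma> v x)) =
         (\<Sum>\<sigma>\<in>insert a E \<rightarrow>\<^sub>E V. F \<sigma>)" by simp
  qed
  finally show ?case .
qed


lemma nonroot_graft: "nonroot (graft \<gamma>1 \<gamma>2 \<phi> \<psi>) = Inl ` nonroot \<gamma>1 \<union> Inr ` nonroot \<gamma>2"
  unfolding nonroot_def graft_def by auto

lemma lianas_graft: "lianas (graft \<gamma>1 \<gamma>2 \<phi> \<psi>) = Inl ` lianas \<gamma>1 \<union> Inr ` lianas \<gamma>2"
  unfolding graft_def by simp

lemma preds_graft_Inr:
  assumes "v \<noteq> root \<gamma>2"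
  shows "preds (graft \<gamma>1 \<gamma>2 \<phi> \<psi>) (Inr v) = Inr ` preds \<gamma>2 v"
  using assms unfolding preds_def nonroot_graft by (auto simp: graft_def nonroot_def split: if_splits)

lemma ends_graft_Inr:
  assumes "v \<noteq> root \<gamma>2"
  shows "ends_at (graft \<gamma>1 \<gamma>2 \<phi> \<psi>) (Inr v) = (\<lambda>x. (Inr (fst x), snd x)) ` ends_at \<gamma>2 v"
  using assms unfolding ends_at_def liana_ends_def lianas_graft
  by (auto simp: graft_def image_iff split: sum.splits if_splits)

lemma preds_graft_Inl:
  "preds (graft \<gamma>1 \<gamma>2 \<phi> \<psi>) (Inl v) = Inl ` preds \<gamma>1 v \<union> Inr ` {w \<in> preds \<gamma>2 (root \<gamma>2). \<phi> w = v}"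
  unfolding preds_def nonroot_graft by (auto simp: graft_def nonroot_def split: if_splits)

lemma ends_graft_Inl:
  "ends_at (graft \<gamma>1 \<gamma>2 \<phi> \<psi>) (Inl v) = (\<lambda>x. (Inl (fst x), snd x)) ` ends_at \<gamma>1 v
     \<union> (\<lambda>x. (Inr (fst x), snd x)) ` {e \<in> ends_at \<gamma>2 (root \<gamma>2). \<psi> e = v}"
  unfolding ends_at_def liana_ends_def lianas_graft
  by (auto simp: graft_def image_iff split: sum.splits if_splits)

lemma mset_set_img: "inj_on f A \<Longrightarrow> image_mset g (mset_set (f ` A)) = image_mset (g \<circ> f) (mset_set A)"
  by (simp add: image_mset_mset_set[symmetric] multiset.map_comp)

lemma mi_Inr: "image_mset g (mset_set (Inr ` A)) = image_mset (g \<circ> Inr) (mset_set A)"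
  by (rule mset_set_img) simp
lemma mi_Inl: "image_mset g (mset_set (Inl ` A)) = image_mset (g \<circ> Inl) (mset_set A)"
  by (rule mset_set_img) simp
lemma mi_pInr: "image_mset g (mset_set ((\<lambda>x. (Inr (fst x), snd x)) ` A)) = image_mset (g \<circ> (\<lambda>x. (Inr (fst x), snd x))) (mset_set A)"
  by (rule mset_set_img) (auto simp: inj_on_def prod_eq_iff)
lemma mi_pInl: "image_mset g (mset_set ((\<lambda>x. (Inl (fst x), snd x)) ` A)) = image_mset (g \<circ> (\<lambda>x. (Inl (fst x), snd x))) (mset_set A)"
  by (rule mset_set_img) (auto simp: inj_on_def prod_eq_iff)

lemma deriv_idx_graft_Inr:
  assumes "v \<noteq> root \<gamma>2"
  shows "deriv_idx (graft \<gamma>1 \<gamma>2 \<phi> \<psi>) (case_sum I1 I2) (case_sum J1 J2) (Inr v) = deriv_idx \<gamma>2 I2 J2 v"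
  unfolding deriv_idx_def preds_graft_Inr[OF assms] ends_graft_Inr[OF assms] mi_Inr mi_pInr
  by (simp add: comp_def)

lemma deriv_idx_graft_Inl:
  assumes "wf_eaf \<gamma>1" "wf_eaf \<gamma>2"
  shows "deriv_idx (graft \<gamma>1 \<gamma>2 \<phi> \<psi>) (case_sum I1 I2) (case_sum J1 J2) (Inl v) =
     deriv_idx \<gamma>1 I1 J1 v + image_mset I2 (mset_set {w \<in> preds \<gamma>2 (root \<gamma>2). \<phi> w = v})
      + image_mset (\<lambda>e. J2 (fst e)) (mset_set {e \<in> ends_at \<gamma>2 (root \<gamma>2). \<psi> e = v})"
proof -
  have fin: "finite (nonroot \<gamma>1)" "finite (nonroot \<gamma>2)" "finite (liana_ends \<gamma>1)" "finite (liana_ends \<gamma>2)"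
    using assms unfolding wf_eaf_def nonroot_def liana_ends_def by auto
  have f1: "finite (preds \<gamma>1 v)" "finite {w \<in> preds \<gamma>2 (root \<gamma>2). \<phi> w = v}"
    using fin unfolding preds_def by auto
  have f2: "finite (ends_at \<gamma>1 v)" "finite {e \<in> ends_at \<gamma>2 (root \<gamma>2). \<psi> e = v}"
    using fin unfolding ends_at_def by auto
  have m1: "mset_set (preds (graft \<gamma>1 \<gamma>2 \<phi> \<psi>) (Inl v)) = mset_set (Inl ` preds \<gamma>1 v) + mset_set (Inr ` {w \<in> preds \<gamma>2 (root \<gamma>2). \<phi> w = v})"
    unfolding preds_graft_Inl using f1 by (intro mset_set_Union) auto
  have m2: "mset_set (ends_at (graft \<gamma>1 \<gamma>2 \<phi> \<psi>) (Inl v)) = mset_set ((\<lambda>x. (Inl (fst x), snd x)) ` ends_at \<gamma>1 v)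
       + mset_set ((\<lambda>x. (Inr (fst x), snd x)) ` {e \<in> ends_at \<gamma>2 (root \<gamma>2). \<psi> e = v})"
    unfolding ends_graft_Inl using f2 by (intro mset_set_Union) auto
  show ?thesis
    unfolding deriv_idx_def m1 m2 image_mset_union mi_Inr mi_Inl mi_pInr mi_pInl
    by (simp add: comp_def split_def ac_simps)
qed

lemma bij_case_sum: "bij_betw (\<lambda>(I1, I2). case_sum I1 I2) ((A \<rightarrow>\<^sub>E X) \<times> (B \<rightarrow>\<^sub>E X)) ((Inl ` A \<union> Inr ` B) \<rightarrow>\<^sub>E X)"
proof (rule bij_betw_byWitness[where f'="\<lambda>I. (I \<circ> Inl, I \<circ> Inr)"])
  show "\<forall>a\<in>(A \<rightarrow>\<^sub>E X) \<times> (B \<rightarrow>\<^sub>E X). (\<lambda>I. (I \<circ> Inl, I \<circ> Inr)) ((\<lambda>(I1, I2). case_sum I1 I2) a) = a"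
    by auto
  show "\<forall>a'\<in>(Inl ` A \<union> Inr ` B) \<rightarrow>\<^sub>E X. (\<lambda>(I1, I2). case_sum I1 I2) ((\<lambda>I. (I \<circ> Inl, I \<circ> Inr)) a') = a'"
    by (auto intro!: ext split: sum.splits)
  show "(\<lambda>(I1, I2). case_sum I1 I2) ` ((A \<rightarrow>\<^sub>E X) \<times> (B \<rightarrow>\<^sub>E X)) \<subseteq> (Inl ` A \<union> Inr ` B) \<rightarrow>\<^sub>E X"
    by (auto simp: PiE_def extensional_def image_iff split: sum.splits) blast+
  show "(\<lambda>I. (I \<circ> Inl, I \<circ> Inr)) ` ((Inl ` A \<union> Inr ` B) \<rightarrow>\<^sub>E X) \<subseteq> (A \<rightarrow>\<^sub>E X) \<times> (B \<rightarrow>\<^sub>E X)"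
    by (auto simp: PiE_def extensional_def)
qed

lemma sum_PiE_plus: "(\<Sum>I\<in>(Inl ` A \<union> Inr ` B) \<rightarrow>\<^sub>E X. F I) = (\<Sum>I1\<in>A \<rightarrow>\<^sub>E X. \<Sum>I2\<in>B \<rightarrow>\<^sub>E X. F (case_sum I1 I2))"
  by (simp add: sum.reindex_bij_betw[OF bij_case_sum, symmetric] sum.cartesian_product split_def)


lemma pm3: "smooth g \<Longrightarrow> pderivs_mset A (pderivs_mset B (pderivs_mset C g)) = pderivs_mset (C + A + B) g"
proof -
  assume g: "smooth g"
  have "pderivs_mset (C + A + B) g = pderivs_mset (A + (B + C)) g" by (simp add: ac_simps)
  also have "\<dots> = pderivs_mset A (pderivs_mset (B + C) g)" using g by (rule pm_plus)
  also have "\<dots> = pderivs_mset A (pderivs_mset B (pderivs_mset C g))" using g by (simp add: pm_plus)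
  finally show ?thesis by simp
qed

lemma double_leibniz:
  fixes c1 :: "'p \<Rightarrow> 'n::finite" and c2 :: "'q \<Rightarrow> 'n" and g :: "'v \<Rightarrow> real^'n \<Rightarrow> real"
  assumes "finite P" "finite Q" "finite V" "\<And>v. v \<in> V \<Longrightarrow> smooth (g v)"
  shows "pderivs_mset (image_mset c1 (mset_set P) + image_mset c2 (mset_set Q)) (\<lambda>x. \<Prod>v\<in>V. pderivs_mset (D v) (g v) x)
    = (\<lambda>x. \<Sum>\<phi>\<in>P \<rightarrow>\<^sub>E V. \<Sum>\<psi>\<in>Q \<rightarrow>\<^sub>E V. \<Prod>v\<in>V. pderivs_mset (D v + image_mset c1 (mset_set {w\<in>P. \<phi> w = v})
        + image_mset c2 (mset_set {e\<in>Q. \<psi> e = v})) (g v) x)"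
proof -
  have sG: "smooth (pderivs_mset (D v) (g v))" if "v \<in> V" for v using assms(4)[OF that] by (rule smooth_pm)
  have "pderivs_mset (image_mset c1 (mset_set P) + image_mset c2 (mset_set Q)) (\<lambda>x. \<Prod>v\<in>V. pderivs_mset (D v) (g v) x)
     = pderivs_mset (image_mset c1 (mset_set P)) (pderivs_mset (image_mset c2 (mset_set Q)) (\<lambda>x. \<Prod>v\<in>V. pderivs_mset (D v) (g v) x))"
    using sG by (intro pm_plus smooth_prod) auto
  also have "\<dots> = pderivs_mset (image_mset c1 (mset_set P)) (\<lambda>x. \<Sum>\<psi>\<in>Q \<rightarrow>\<^sub>E V. \<Prod>v\<in>V.
        pderivs_mset (image_mset c2 (mset_set {e\<in>Q. \<psi> e = v})) (pderivs_mset (D v) (g v)) x)"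
    using sG assms by (subst leibniz) auto
  also have "\<dots> = (\<lambda>x. \<Sum>\<psi>\<in>Q \<rightarrow>\<^sub>E V. pderivs_mset (image_mset c1 (mset_set P)) (\<lambda>x. \<Prod>v\<in>V.
        pderivs_mset (image_mset c2 (mset_set {e\<in>Q. \<psi> e = v})) (pderivs_mset (D v) (g v)) x) x)"
    using sG assms(4) by (intro pm_sum smooth_prod smooth_pm) auto
  also have "\<dots> = (\<lambda>x. \<Sum>\<psi>\<in>Q \<rightarrow>\<^sub>E V. \<Sum>\<phi>\<in>P \<rightarrow>\<^sub>E V. \<Prod>v\<in>V. pderivs_mset (image_mset c1 (mset_set {w\<in>P. \<phi> w = v}))
        (pderivs_mset (image_mset c2 (mset_set {e\<in>Q. \<psi> e = v})) (pderivs_mset (D v) (g v))) x)"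
    using sG assms by (subst leibniz) (auto intro: smooth_pm)
  also have "\<dots> = (\<lambda>x. \<Sum>\<psi>\<in>Q \<rightarrow>\<^sub>E V. \<Sum>\<phi>\<in>P \<rightarrow>\<^sub>E V. \<Prod>v\<in>V. pderivs_mset (D v + image_mset c1 (mset_set {w\<in>P. \<phi> w = v})
        + image_mset c2 (mset_set {e\<in>Q. \<psi> e = v})) (g v) x)"
    using assms(4) by (intro ext sum.cong refl prod.cong) (simp add: pm3)
  also have "\<dots> = (\<lambda>x. \<Sum>\<phi>\<in>P \<rightarrow>\<^sub>E V. \<Sum>\<psi>\<in>Q \<rightarrow>\<^sub>E V. \<Prod>v\<in>V. pderivs_mset (D v + image_mset c1 (mset_set {w\<in>P. \<phi> w = v})
        + image_mset c2 (mset_set {e\<in>Q. \<psi> e = v})) (g v) x)"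
    by (rule ext) (rule sum.swap)
  finally show ?thesis .
qed


lemma smooth_g0:
  assumes "\<And>i. smooth (\<lambda>x. f x $ i)" "smooth \<phi>"
  shows "smooth (if v = r then \<phi> else (\<lambda>y. f y $ (I1 v)))"
  using assms by simp

lemma nodes_insert: "wf_eaf \<gamma> \<Longrightarrow> nodes \<gamma> = insert (root \<gamma>) (nonroot \<gamma>)"
  unfolding wf_eaf_def nonroot_def by auto

lemma wf_fin:
  assumes "wf_eaf \<gamma>"
  shows "finite (nodes \<gamma>)" "finite (nonroot \<gamma>)" "finite (lianas \<gamma>)" "finite (preds \<gamma> v)" "finite (ends_at \<gamma> v)"
  using assms unfolding wf_eaf_def nonroot_def preds_def ends_at_def liana_ends_def by auto

lemma elem1:
  assumes "wf_eaf \<gamma>1"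
  shows "elem_diff f \<gamma>1 \<phi> = (\<lambda>x. \<Sum>I1\<in>nonroot \<gamma>1 \<rightarrow>\<^sub>E (UNIV::'n::finite set). \<Sum>J1\<in>lianas \<gamma>1 \<rightarrow>\<^sub>E (UNIV::'n set).
     \<Prod>v\<in>nodes \<gamma>1. pderivs_mset (deriv_idx \<gamma>1 I1 J1 v) (if v = root \<gamma>1 then \<phi> else (\<lambda>y. f y $ I1 v)) x)"
  unfolding elem_diff_def
proof (intro ext sum.cong refl)
  fix x I1 J1
  have r: "root \<gamma>1 \<notin> nonroot \<gamma>1" unfolding nonroot_def by simp
  show "(\<Prod>v\<in>nonroot \<gamma>1. pderivs_mset (deriv_idx \<gamma>1 I1 J1 v) (\<lambda>y. f y $ I1 v) x) *
          pderivs_mset (deriv_idx \<gamma>1 I1 J1 (root \<gamma>1)) \<phi> x =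
        (\<Prod>v\<in>nodes \<gamma>1. pderivs_mset (deriv_idx \<gamma>1 I1 J1 v) (if v = root \<gamma>1 then \<phi> else (\<lambda>y. f y $ I1 v)) x)"
  proof -
    have "(\<Prod>v\<in>nodes \<gamma>1. pderivs_mset (deriv_idx \<gamma>1 I1 J1 v) (if v = root \<gamma>1 then \<phi> else (\<lambda>y. f y $ I1 v)) x)
      = pderivs_mset (deriv_idx \<gamma>1 I1 J1 (root \<gamma>1)) \<phi> x * (\<Prod>v\<in>nonroot \<gamma>1. pderivs_mset (deriv_idx \<gamma>1 I1 J1 v) (if v = root \<gamma>1 then \<phi> else (\<lambda>y. f y $ I1 v)) x)"
      by (subst nodes_insert[OF assms]) (simp add: prod.insert[OF wf_fin(2)[OF assms] r])
    also have "(\<Prod>v\<in>nonroot \<gamma>1. pderivs_mset (deriv_idx \<gamma>1 I1 J1 v) (if v = root \<gamma>1 then \<phi> else (\<lambda>y. f y $ I1 v)) x)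
      = (\<Prod>v\<in>nonroot \<gamma>1. pderivs_mset (deriv_idx \<gamma>1 I1 J1 v) (\<lambda>y. f y $ I1 v) x)"
      by (rule prod.cong) (auto simp: nonroot_def)
    finally show ?thesis by simp
  qed
qed


lemma root_graft: "root (graft \<gamma>1 \<gamma>2 \<phi> \<psi>) = Inl (root \<gamma>1)"
  unfolding graft_def by simp

lemma graft_term:
  assumes w1: "wf_eaf \<gamma>1" and w2: "wf_eaf \<gamma>2"
  shows "(\<Prod>u\<in>nonroot (graft \<gamma>1 \<gamma>2 \<phi>' \<psi>). pderivs_mset (deriv_idx (graft \<gamma>1 \<gamma>2 \<phi>' \<psi>) (case_sum I1 I2) (case_sum J1 J2) u)
             (\<lambda>y. f y $ case_sum I1 I2 u) x) *
         pderivs_mset (deriv_idx (graft \<gamma>1 \<gamma>2 \<phi>' \<psi>) (case_sum I1 I2) (case_sum J1 J2) (root (graft \<gamma>1 \<gamma>2 \<phi>' \<psi>))) \<phi> x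
   = (\<Prod>v\<in>nonroot \<gamma>2. pderivs_mset (deriv_idx \<gamma>2 I2 J2 v) (\<lambda>y. f y $ I2 v) x) *
     (\<Prod>v\<in>nodes \<gamma>1. pderivs_mset (deriv_idx \<gamma>1 I1 J1 v + image_mset I2 (mset_set {w\<in>preds \<gamma>2 (root \<gamma>2). \<phi>' w = v})
        + image_mset (\<lambda>e. J2 (fst e)) (mset_set {e\<in>ends_at \<gamma>2 (root \<gamma>2). \<psi> e = v}))
        (if v = root \<gamma>1 then \<phi> else (\<lambda>y. f y $ I1 v)) x)"
  (is "?L = ?A * ?B")
proof -
  let ?g = "graft \<gamma>1 \<gamma>2 \<phi>' \<psi>"
  let ?D = "\<lambda>v. deriv_idx \<gamma>1 I1 J1 v + image_mset I2 (mset_set {w\<in>preds \<gamma>2 (root \<gamma>2). \<phi>' w = v})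
        + image_mset (\<lambda>e. J2 (fst e)) (mset_set {e\<in>ends_at \<gamma>2 (root \<gamma>2). \<psi> e = v})"
  let ?T = "\<lambda>u. pderivs_mset (deriv_idx ?g (case_sum I1 I2) (case_sum J1 J2) u) (\<lambda>y. f y $ case_sum I1 I2 u) x"
  have r: "root \<gamma>1 \<notin> nonroot \<gamma>1" unfolding nonroot_def by simp
  have "(\<Prod>u\<in>nonroot ?g. ?T u) = (\<Prod>u\<in>Inl ` nonroot \<gamma>1. ?T u) * (\<Prod>u\<in>Inr ` nonroot \<gamma>2. ?T u)"
    unfolding nonroot_graft using wf_fin(2)[OF w1] wf_fin(2)[OF w2]
    by (intro prod.union_disjoint) auto
  also have "\<dots> = (\<Prod>v\<in>nonroot \<gamma>1. ?T (Inl v)) * (\<Prod>v\<in>nonroot \<gamma>2. ?T (Inr v))"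
    by (simp add: prod.reindex)
  also have "(\<Prod>v\<in>nonroot \<gamma>2. ?T (Inr v)) = ?A"
    by (rule prod.cong) (auto simp: nonroot_def deriv_idx_graft_Inr)
  also have "(\<Prod>v\<in>nonroot \<gamma>1. ?T (Inl v)) = (\<Prod>v\<in>nonroot \<gamma>1. pderivs_mset (?D v) (if v = root \<gamma>1 then \<phi> else (\<lambda>y. f y $ I1 v)) x)"
    by (rule prod.cong) (auto simp: nonroot_def deriv_idx_graft_Inl[OF w1 w2])
  finally have L1: "(\<Prod>u\<in>nonroot ?g. ?T u) = (\<Prod>v\<in>nonroot \<gamma>1. pderivs_mset (?D v) (if v = root \<gamma>1 then \<phi> else (\<lambda>y. f y $ I1 v)) x) * ?A" .
  have L2: "pderivs_mset (deriv_idx ?g (case_sum I1 I2) (case_sum J1 J2) (root ?g)) \<phi> x = pderivs_mset (?D (root \<gamma>1)) \<phi> x"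
    by (simp add: root_graft deriv_idx_graft_Inl[OF w1 w2])
  have B: "?B = pderivs_mset (?D (root \<gamma>1)) \<phi> x * (\<Prod>v\<in>nonroot \<gamma>1. pderivs_mset (?D v) (if v = root \<gamma>1 then \<phi> else (\<lambda>y. f y $ I1 v)) x)"
    by (subst nodes_insert[OF w1]) (simp add: prod.insert[OF wf_fin(2)[OF w1] r])
  show ?thesis unfolding L1 L2 B by (simp add: ac_simps)
qed

lemma graft_sum:
  assumes w1: "wf_eaf \<gamma>1" and w2: "wf_eaf \<gamma>2"
  shows "elem_diff f (graft \<gamma>1 \<gamma>2 \<phi>' \<psi>) \<phi> x =
    (\<Sum>I1\<in>nonroot \<gamma>1 \<rightarrow>\<^sub>E (UNIV::'n::finite set). \<Sum>I2\<in>nonroot \<gamma>2 \<rightarrow>\<^sub>E (UNIV::'n set).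
     \<Sum>J1\<in>lianas \<gamma>1 \<rightarrow>\<^sub>E (UNIV::'n set). \<Sum>J2\<in>lianas \<gamma>2 \<rightarrow>\<^sub>E (UNIV::'n set).
     (\<Prod>v\<in>nonroot \<gamma>2. pderivs_mset (deriv_idx \<gamma>2 I2 J2 v) (\<lambda>y. f y $ I2 v) x) *
     (\<Prod>v\<in>nodes \<gamma>1. pderivs_mset (deriv_idx \<gamma>1 I1 J1 v + image_mset I2 (mset_set {w\<in>preds \<gamma>2 (root \<gamma>2). \<phi>' w = v})
        + image_mset (\<lambda>e. J2 (fst e)) (mset_set {e\<in>ends_at \<gamma>2 (root \<gamma>2). \<psi> e = v}))
        (if v = root \<gamma>1 then \<phi> else (\<lambda>y. f y $ I1 v)) x))" (is "_ = ?rhs")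
proof -
  have "elem_diff f (graft \<gamma>1 \<gamma>2 \<phi>' \<psi>) \<phi> x =
    (\<Sum>I1\<in>nonroot \<gamma>1 \<rightarrow>\<^sub>E (UNIV::'n::finite set). \<Sum>I2\<in>nonroot \<gamma>2 \<rightarrow>\<^sub>E (UNIV::'n set).
     \<Sum>J1\<in>lianas \<gamma>1 \<rightarrow>\<^sub>E (UNIV::'n set). \<Sum>J2\<in>lianas \<gamma>2 \<rightarrow>\<^sub>E (UNIV::'n set).
      (\<Prod>u\<in>nonroot (graft \<gamma>1 \<gamma>2 \<phi>' \<psi>). pderivs_mset (deriv_idx (graft \<gamma>1 \<gamma>2 \<phi>' \<psi>) (case_sum I1 I2) (case_sum J1 J2) u)
             (\<lambda>y. f y $ case_sum I1 I2 u) x) *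
         pderivs_mset (deriv_idx (graft \<gamma>1 \<gamma>2 \<phi>' \<psi>) (case_sum I1 I2) (case_sum J1 J2) (root (graft \<gamma>1 \<gamma>2 \<phi>' \<psi>))) \<phi> x)"
    by (simp only: elem_diff_def nonroot_graft lianas_graft sum_PiE_plus)
  also have "\<dots> = ?rhs"
    by (simp only: graft_term[OF w1 w2])
  finally show ?thesis .
qed


theorem mainTheorem1:
  fixes f :: "real^'n::finite \<Rightarrow> real^'n"
    and \<phi> :: "real^'n \<Rightarrow> real"
    and \<gamma>1 :: "('v, 'l1) eaf" and \<gamma>2 :: "('w, 'l2) eaf"
  assumes "\<And>i. smooth (\<lambda>x. f x $ i)"
    and "smooth \<phi>"
    and "wf_eaf \<gamma>1" and "wf_eaf \<gamma>2"
  shows "elem_diff f \<gamma>2 (elem_diff f \<gamma>1 \<phi>) =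
    (\<lambda>x. \<Sum>\<phi>' \<in> preds \<gamma>2 (root \<gamma>2) \<rightarrow>\<^sub>E nodes \<gamma>1.
          \<Sum>\<psi> \<in> ends_at \<gamma>2 (root \<gamma>2) \<rightarrow>\<^sub>E nodes \<gamma>1.
            elem_diff f (graft \<gamma>1 \<gamma>2 \<phi>' \<psi>) \<phi> x)"
proof (rule ext)
  fix x
  note sf = assms(1) and sp = assms(2) and w1 = assms(3) and w2 = assms(4)
  let ?SI1 = "nonroot \<gamma>1 \<rightarrow>\<^sub>E (UNIV::'n set)"
  let ?SJ1 = "lianas \<gamma>1 \<rightarrow>\<^sub>E (UNIV::'n set)"
  let ?SI2 = "nonroot \<gamma>2 \<rightarrow>\<^sub>E (UNIV::'n set)"
  let ?SJ2 = "lianas \<gamma>2 \<rightarrow>\<^sub>E (UNIV::'n set)"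
  let ?P = "preds \<gamma>2 (root \<gamma>2)"
  let ?Q = "ends_at \<gamma>2 (root \<gamma>2)"
  let ?SF = "?P \<rightarrow>\<^sub>E nodes \<gamma>1"
  let ?SS = "?Q \<rightarrow>\<^sub>E nodes \<gamma>1"
  let ?g0 = "\<lambda>I1 v. if v = root \<gamma>1 then \<phi> else (\<lambda>y. f y $ I1 v)"
  let ?A = "\<lambda>I2 J2. \<Prod>v\<in>nonroot \<gamma>2. pderivs_mset (deriv_idx \<gamma>2 I2 J2 v) (\<lambda>y. f y $ I2 v) x"
  let ?B = "\<lambda>I1 J1 I2 J2 \<phi>' \<psi>. \<Prod>v\<in>nodes \<gamma>1. pderivs_mset (deriv_idx \<gamma>1 I1 J1 v
        + image_mset I2 (mset_set {w\<in>?P. \<phi>' w = v})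
        + image_mset (\<lambda>e. J2 (fst e)) (mset_set {e\<in>?Q. \<psi> e = v})) (?g0 I1 v) x"
  have sg0: "smooth (?g0 I1 v)" for I1 v using sf sp by simp
  have E2: "pderivs_mset (deriv_idx \<gamma>2 I2 J2 (root \<gamma>2)) (elem_diff f \<gamma>1 \<phi>) x
      = (\<Sum>I1\<in>?SI1. \<Sum>J1\<in>?SJ1. \<Sum>\<phi>'\<in>?SF. \<Sum>\<psi>\<in>?SS. ?B I1 J1 I2 J2 \<phi>' \<psi>)" for I2 J2
  proof -
    let ?M = "image_mset I2 (mset_set ?P) + image_mset (\<lambda>e. J2 (fst e)) (mset_set ?Q)"
    have d: "deriv_idx \<gamma>2 I2 J2 (root \<gamma>2) = ?M" by (simp add: deriv_idx_def)
    have "pderivs_mset ?M (elem_diff f \<gamma>1 \<phi>) = pderivs_mset ?M (\<lambda>x. \<Sum>I1\<in>?SI1. \<Sum>J1\<in>?SJ1.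
       \<Prod>v\<in>nodes \<gamma>1. pderivs_mset (deriv_idx \<gamma>1 I1 J1 v) (?g0 I1 v) x)"
      by (simp only: elem1[OF w1])
    also have "\<dots> = (\<lambda>x. \<Sum>I1\<in>?SI1. pderivs_mset ?M (\<lambda>x. \<Sum>J1\<in>?SJ1.
       \<Prod>v\<in>nodes \<gamma>1. pderivs_mset (deriv_idx \<gamma>1 I1 J1 v) (?g0 I1 v) x) x)"
      by (rule pm_sum) (intro smooth_sum smooth_prod smooth_pm sg0)
    also have "\<dots> = (\<lambda>x. \<Sum>I1\<in>?SI1. \<Sum>J1\<in>?SJ1. pderivs_mset ?M (\<lambda>x.
       \<Prod>v\<in>nodes \<gamma>1. pderivs_mset (deriv_idx \<gamma>1 I1 J1 v) (?g0 I1 v) x) x)"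
    proof (intro ext sum.cong refl)
      fix x I1 show "pderivs_mset ?M (\<lambda>x. \<Sum>J1\<in>?SJ1.
       \<Prod>v\<in>nodes \<gamma>1. pderivs_mset (deriv_idx \<gamma>1 I1 J1 v) (?g0 I1 v) x) x = (\<Sum>J1\<in>?SJ1. pderivs_mset ?M (\<lambda>x.
       \<Prod>v\<in>nodes \<gamma>1. pderivs_mset (deriv_idx \<gamma>1 I1 J1 v) (?g0 I1 v) x) x)"
        by (subst pm_sum) (auto intro!: smooth_prod smooth_pm sg0)
    qed
    also have "\<dots> = (\<lambda>x. \<Sum>I1\<in>?SI1. \<Sum>J1\<in>?SJ1. \<Sum>\<phi>'\<in>?SF. \<Sum>\<psi>\<in>?SS. \<Prod>v\<in>nodes \<gamma>1. pderivs_mset (deriv_idx \<gamma>1 I1 J1 v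
        + image_mset I2 (mset_set {w\<in>?P. \<phi>' w = v})
        + image_mset (\<lambda>e. J2 (fst e)) (mset_set {e\<in>?Q. \<psi> e = v})) (?g0 I1 v) x)"
    proof (intro ext sum.cong refl)
      fix x I1 J1 show "pderivs_mset ?M (\<lambda>x. \<Prod>v\<in>nodes \<gamma>1. pderivs_mset (deriv_idx \<gamma>1 I1 J1 v) (?g0 I1 v) x) x
        = (\<Sum>\<phi>'\<in>?SF. \<Sum>\<psi>\<in>?SS. \<Prod>v\<in>nodes \<gamma>1. pderivs_mset (deriv_idx \<gamma>1 I1 J1 v
        + image_mset I2 (mset_set {w\<in>?P. \<phi>' w = v})
        + image_mset (\<lambda>e. J2 (fst e)) (mset_set {e\<in>?Q. \<psi> e = v})) (?g0 I1 v) x)"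
        by (subst double_leibniz) (auto simp: wf_fin[OF w1] wf_fin[OF w2] sg0)
    qed
    finally show ?thesis by (simp only: d)
  qed
  have "elem_diff f \<gamma>2 (elem_diff f \<gamma>1 \<phi>) x = (\<Sum>I2\<in>?SI2. \<Sum>J2\<in>?SJ2. ?A I2 J2 *
          pderivs_mset (deriv_idx \<gamma>2 I2 J2 (root \<gamma>2)) (elem_diff f \<gamma>1 \<phi>) x)"
    unfolding elem_diff_def[of f \<gamma>2] by simp
  also have "\<dots> = (\<Sum>I2\<in>?SI2. \<Sum>J2\<in>?SJ2. \<Sum>I1\<in>?SI1. \<Sum>J1\<in>?SJ1. \<Sum>\<phi>'\<in>?SF. \<Sum>\<psi>\<in>?SS. ?A I2 J2 * ?B I1 J1 I2 J2 \<phi>' \<psi>)"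
    by (simp only: E2 sum_distrib_left)
  also have "\<dots> = (\<Sum>\<phi>'\<in>?SF. \<Sum>\<psi>\<in>?SS. \<Sum>I1\<in>?SI1. \<Sum>I2\<in>?SI2. \<Sum>J1\<in>?SJ1. \<Sum>J2\<in>?SJ2. ?A I2 J2 * ?B I1 J1 I2 J2 \<phi>' \<psi>)"
    by (simp only: sum.swap[of _ ?SI2 ?SF] sum.swap[of _ ?SJ2 ?SF] sum.swap[of _ ?SI1 ?SF] sum.swap[of _ ?SJ1 ?SF]
       sum.swap[of _ ?SS ?SF]
       sum.swap[of _ ?SI2 ?SS] sum.swap[of _ ?SJ2 ?SS] sum.swap[of _ ?SI1 ?SS] sum.swap[of _ ?SJ1 ?SS]
       sum.swap[of _ ?SI2 ?SI1] sum.swap[of _ ?SJ1 ?SI1] sum.swap[of _ ?SJ2 ?SI1]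
       sum.swap[of _ ?SJ1 ?SI2] sum.swap[of _ ?SJ2 ?SI2] sum.swap[of _ ?SJ2 ?SJ1])
  also have "\<dots> = (\<Sum>\<phi>'\<in>?SF. \<Sum>\<psi>\<in>?SS. elem_diff f (graft \<gamma>1 \<gamma>2 \<phi>' \<psi>) \<phi> x)"
    by (simp only: graft_sum[OF w1 w2])
  finally show "elem_diff f \<gamma>2 (elem_diff f \<gamma>1 \<phi>) x = (\<Sum>\<phi>'\<in>?SF. \<Sum>\<psi>\<in>?SS. elem_diff f (graft \<gamma>1 \<gamma>2 \<phi>' \<psi>) \<phi> x)" .
qed


end
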